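(* There is an absolute constant $c>0$ such that the following holds. Let $K\ge4$ and $T\ge K^3$. Define valuations $v_i=\tfrac12+\frac{i-1}{4K-2i-2}$ for $i\in[K]$ (so $v_1=\tfrac12$, $v_K=1$), and set $\varepsilon=\frac{1}{3\sqrt{24}}\sqrt{(K-2)/T}$. For $j\in\{2,\dots,K-1\}$ let $Q_j$ be the distribution on $\{v_1,\dots,v_K\}$ with $Q_j(v_{j-1})=\frac{1}{2K-2}-\varepsilon$, $Q_j(v_j)=\frac{1}{2K-2}+\varepsilon$, $Q_j(v_K)=\tfrac12$, and $Q_j(v_i)=\frac{1}{2K-2}$ for all other $i$. Let $J$ be uniform on $\{2,\dots,K-1\}$ and $Q_\star=Q_J$. Then for every (possibly randomized) non-contextual pricing algorithm $\mathcal{A}$, $\mathbb{E}[R(T)]\ge c\sqrt{KT}$, where the expectation is over $J$, the valuations, and $\mathcal{A}$.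
   Context: Non-contextual pricing: a valuation distribution $Q_\star$ on $[0,1]$ is fixed. In each round $t=1,\dots,T$, a valuation $V_t\sim Q_\star$ is drawn i.i.d.; the seller, based on $(p_\tau,y_\tau)_{\tau<t}$, posts $p_t\in[0,1]$ and observes $y_t=\mathbf{1}\{V_t\ge p_t\}$. With $\mathsf{dem}_Q(p)=\mathbb{P}_{v\sim Q}[v\ge p]$, $\mathsf{rev}_Q(p)=p\,\mathsf{dem}_Q(p)$ and $\mathsf{gap}_Q(p)=\max_{x\in[0,1]}\mathsf{rev}_Q(x)-\mathsf{rev}_Q(p)$, the regret is $R(T)=\sum_{t=1}^T\mathsf{gap}_{Q_\star}(p_t)$. *)

theory Defs
  imports "HOL-Probability.Probability"
begin

definition dem :: "real pmf \<Rightarrow> real \<Rightarrow> real" where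
  "dem Q p = measure_pmf.prob Q {v. v \<ge> p}"

definition rev :: "real pmf \<Rightarrow> real \<Rightarrow> real" where
  "rev Q p = p * dem Q p"

definition gap :: "real pmf \<Rightarrow> real \<Rightarrow> real" where
  "gap Q p = (SUP x\<in>{0..1}. rev Q x) - rev Q p"

type_synonym policy = "(real \<times> bool) list \<Rightarrow> real"

text \<open>History before round t (rounds indexed from 0) given the valuation sequence V.\<close>
fun hist :: "policy \<Rightarrow> (nat \<Rightarrow> real) \<Rightarrow> nat \<Rightarrow> (real \<times> bool) list" where
  "hist pol V 0 = []"
| "hist pol V (Suc t) = (let h = hist pol V t; p = pol h in h @ [(p, V t \<ge> p)])"

definition regret :: "real pmf \<Rightarrow> policy \<Rightarrow> (nat \<Rightarrow> real) \<Rightarrow> nat \<Rightarrow> real" where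
  "regret Q pol V T = (\<Sum>t<T. gap Q (pol (hist pol V t)))"

definition val :: "nat \<Rightarrow> nat \<Rightarrow> real" where
  "val K i = 1/2 + (real i - 1) / (4 * real K - 2 * real i - 2)"

definition eps :: "nat \<Rightarrow> nat \<Rightarrow> real" where
  "eps K T = (1 / (3 * sqrt 24)) * sqrt ((real K - 2) / real T)"

definition wt :: "nat \<Rightarrow> nat \<Rightarrow> nat \<Rightarrow> nat \<Rightarrow> real" where
  "wt K T j i =
     (if i = K then 1/2
      else if i = j - 1 then 1 / (2 * real K - 2) - eps K T
      else if i = j then 1 / (2 * real K - 2) + eps K T
      else 1 / (2 * real K - 2))"

definition Qj :: "nat \<Rightarrow> nat \<Rightarrow> nat \<Rightarrow> real pmf" where
  "Qj K T j = embed_pmf (\<lambda>x. \<Sum>i\<in>{1..K}. if val K i = x then wt K T j i else 0)"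

definition exp_regret :: "nat \<Rightarrow> nat \<Rightarrow> policy \<Rightarrow> real" where
  "exp_regret K T pol =
     measure_pmf.expectation (pmf_of_set {2..K-1}) (\<lambda>j.
       measure_pmf.expectation (Pi_pmf {..<T} 0 (\<lambda>_. Qj K T j)) (\<lambda>V. regret (Qj K T j) pol V T))"

end

theory Submission
  imports Defs
begin



fun Ev :: "(real \<Rightarrow> real) \<Rightarrow> policy \<Rightarrow> nat \<Rightarrow> ((real \<times> bool) list \<Rightarrow> real) \<Rightarrow> (real \<times> bool) list \<Rightarrow> real" where
  "Ev d pol 0 F h = F h"
| "Ev d pol (Suc n) F h = d (pol h) * Ev d pol n F (h @ [(pol h, True)]) + (1 - d (pol h)) * Ev d pol n F (h @ [(pol h, False)])"

fun Cst :: "(real \<Rightarrow> real) \<Rightarrow> policy \<Rightarrow> (real \<Rightarrow> real) \<Rightarrow> nat \<Rightarrow> (real \<times> bool) list \<Rightarrow> real" where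
  "Cst d pol c 0 h = 0"
| "Cst d pol c (Suc n) h = c (pol h) + d (pol h) * Cst d pol c n (h @ [(pol h, True)]) + (1 - d (pol h)) * Cst d pol c n (h @ [(pol h, False)])"

definition kern :: "(real \<Rightarrow> real) \<Rightarrow> bool" where
  "kern d \<longleftrightarrow> (\<forall>p. 0 \<le> d p \<and> d p \<le> 1)"

lemma Ev_mono_len:
  assumes "kern d" "\<And>h'. length h' = length h + n \<Longrightarrow> F h' \<le> G h'"
  shows "Ev d pol n F h \<le> Ev d pol n G h"
  using assms(2)
proof (induction n arbitrary: h)
  case 0 then show ?case by simp
next
  case (Suc n)
  let ?p = "pol h"
  have 1: "Ev d pol n F (h @ [(?p, b)]) \<le> Ev d pol n G (h @ [(?p, b)])" for b
    by (rule Suc.IH) (use Suc.prems in auto)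
  have d: "0 \<le> d ?p" "d ?p \<le> 1" using assms(1) by (auto simp: kern_def)
  show ?case using 1[of True] 1[of False] d
    by (simp add: add_mono mult_left_mono)
qed

lemma Ev_const: "Ev d pol n (\<lambda>_. c) h = c"
  by (induction n arbitrary: h) (simp_all add: algebra_simps)

lemma Ev_lin: "Ev d pol n (\<lambda>h. a * F h + b * G h) h = a * Ev d pol n F h + b * Ev d pol n G h"
  by (induction n arbitrary: h) (simp_all add: algebra_simps)

lemma Ev_add_const: "Ev d pol n (\<lambda>h. a + F h) h = a + Ev d pol n F h"
  by (induction n arbitrary: h) (simp_all add: algebra_simps)

lemma Ev_sum: "finite S \<Longrightarrow> Ev d pol n (\<lambda>h. \<Sum>j\<in>S. F j h) h = (\<Sum>j\<in>S. Ev d pol n (F j) h)"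
proof (induction S rule: finite_induct)
  case empty then show ?case by (simp add: Ev_const)
next
  case (insert x S)
  then show ?case using Ev_lin[of d pol n 1 "F x" 1 "\<lambda>h. \<Sum>j\<in>S. F j h" h] by simp
qed

lemma Ev_pos:
  assumes "kern d" "\<And>h. F h > 0"
  shows "Ev d pol n F h > 0"
proof (induction n arbitrary: h)
  case 0 then show ?case using assms by simp
next
  case (Suc n)
  let ?p = "pol h"
  have d: "0 \<le> d ?p" "d ?p \<le> 1" using assms(1) by (auto simp: kern_def)
  have a: "Ev d pol n F (h @ [(?p, b)]) > 0" for b by (rule Suc.IH)
  show ?case
  proof (cases "d ?p = 0")
    case True then show ?thesis using a[of False] by simp
  next
    case False
    then have "d ?p * Ev d pol n F (h @ [(?p, True)]) > 0" using d a[of True] by simp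
    moreover have "(1 - d ?p) * Ev d pol n F (h @ [(?p, False)]) \<ge> 0" using d a[of False] by simp
    ultimately show ?thesis by simp
  qed
qed

lemma Ev_last:
  "Ev d pol (Suc n) F h = Ev d pol n (\<lambda>h'. d (pol h') * F (h' @ [(pol h', True)]) + (1 - d (pol h')) * F (h' @ [(pol h', False)])) h"
proof (induction n arbitrary: h)
  case 0 then show ?case by simp
next
  case (Suc n)
  have "Ev d pol (Suc (Suc n)) F h = d (pol h) * Ev d pol (Suc n) F (h @ [(pol h, True)]) + (1 - d (pol h)) * Ev d pol (Suc n) F (h @ [(pol h, False)])"
    by (rule Ev.simps(2))
  also have "\<dots> = d (pol h) * Ev d pol n (\<lambda>h'. d (pol h') * F (h' @ [(pol h', True)]) + (1 - d (pol h')) * F (h' @ [(pol h', False)])) (h @ [(pol h, True)]) + (1 - d (pol h)) * Ev d pol n (\<lambda>h'. d (pol h') * F (h' @ [(pol h', True)]) + (1 - d (pol h')) * F (h' @ [(pol h', False)])) (h @ [(pol h, False)])"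
    by (simp only: Suc.IH)
  also have "\<dots> = Ev d pol (Suc n) (\<lambda>h'. d (pol h') * F (h' @ [(pol h', True)]) + (1 - d (pol h')) * F (h' @ [(pol h', False)])) h"
    by (rule Ev.simps(2)[symmetric])
  finally show ?case .
qed

definition csum :: "(real \<Rightarrow> real) \<Rightarrow> (real \<times> bool) list \<Rightarrow> real" where
  "csum c h = sum_list (map (\<lambda>x. c (fst x)) h)"

lemma csum_snoc[simp]: "csum c (h @ [x]) = csum c h + c (fst x)"
  by (simp add: csum_def)

lemma csum_Nil[simp]: "csum c [] = 0"
  by (simp add: csum_def)

lemma Cst_Ev:
  "Cst d pol c n h + csum c h = Ev d pol n (csum c) h"
proof (induction n arbitrary: h)
  case 0 then show ?case by simp
next
  case (Suc n)
  have e: "Ev d pol n (csum c) (h @ [(pol h, b)]) = c (pol h) + csum c h + Cst d pol c n (h @ [(pol h, b)])" for b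
    using Suc.IH[of "h @ [(pol h, b)]"] by simp
  show ?case by (simp only: Ev.simps Cst.simps e) (simp add: algebra_simps)
qed

lemma DV:
  assumes k0: "kern d0" and k1: "kern d1"
    and step: "\<And>p x1 x2. x1 > 0 \<Longrightarrow> x2 > 0 \<Longrightarrow>
       d0 p * ln x1 + (1 - d0 p) * ln x2 \<le> c p + ln (d1 p * x1 + (1 - d1 p) * x2)"
  shows "Ev d0 pol n G h \<le> Cst d0 pol c n h + ln (Ev d1 pol n (\<lambda>h'. exp (G h')) h)"
proof (induction n arbitrary: h)
  case 0 then show ?case by simp
next
  case (Suc n)
  let ?p = "pol h"
  define A where "A b = Ev d0 pol n G (h @ [(?p, b)])" for b
  define B where "B b = Ev d1 pol n (\<lambda>h'. exp (G h')) (h @ [(?p, b)])" for b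
  define C where "C b = Cst d0 pol c n (h @ [(?p, b)])" for b
  have IH: "A b \<le> C b + ln (B b)" for b unfolding A_def B_def C_def by (rule Suc.IH)
  have Bp: "B b > 0" for b unfolding B_def by (rule Ev_pos[OF k1]) simp
  have d: "0 \<le> d0 ?p" "d0 ?p \<le> 1" using k0 by (auto simp: kern_def)
  have "Ev d0 pol (Suc n) G h = d0 ?p * A True + (1 - d0 ?p) * A False" by (simp add: A_def)
  also have "\<dots> \<le> d0 ?p * (C True + ln (B True)) + (1 - d0 ?p) * (C False + ln (B False))"
    using IH d by (intro add_mono mult_left_mono) auto
  also have "\<dots> = (d0 ?p * C True + (1 - d0 ?p) * C False) + (d0 ?p * ln (B True) + (1 - d0 ?p) * ln (B False))"
    by (simp add: algebra_simps)
  also have "\<dots> \<le> (d0 ?p * C True + (1 - d0 ?p) * C False) + (c ?p + ln (d1 ?p * B True + (1 - d1 ?p) * B False))"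
    using step[OF Bp Bp] by simp
  also have "\<dots> = Cst d0 pol c (Suc n) h + ln (Ev d1 pol (Suc n) (\<lambda>h'. exp (G h')) h)"
    by (simp add: C_def B_def)
  finally show ?case .
qed




lemma pos_comb:
  assumes "0 \<le> q" "q \<le> 1" "x1 > 0" "x2 > 0"
  shows "0 < q * x1 + (1 - q) * (x2::real)"
proof (cases "q = 0")
  case True then show ?thesis using assms by simp
next
  case False
  then have "q * x1 > 0" using assms by simp
  moreover have "(1 - q) * x2 \<ge> 0" using assms by simp
  ultimately show ?thesis by linarith
qed

lemma ln_jensen2:
  assumes "0 \<le> q" "q \<le> 1" "(x1::real) > 0" "x2 > 0"
  shows "q * ln x1 + (1 - q) * ln x2 \<le> ln (q * x1 + (1 - q) * x2)"
proof -
  define m where "m = q * x1 + (1 - q) * x2"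
  have m: "m > 0" unfolding m_def by (rule pos_comb[OF assms])
  have a: "ln (x1 / m) \<le> x1 / m - 1" using m assms by (intro ln_le_minus_one) auto
  have b: "ln (x2 / m) \<le> x2 / m - 1" using m assms by (intro ln_le_minus_one) auto
  have "q * ln (x1 / m) + (1 - q) * ln (x2 / m) \<le> q * (x1 / m - 1) + (1 - q) * (x2 / m - 1)"
    using a b assms by (intro add_mono mult_left_mono) auto
  also have "\<dots> = 0" using m by (simp add: m_def field_simps)
  finally have "q * ln (x1 / m) + (1 - q) * ln (x2 / m) \<le> 0" .
  moreover have "q * ln (x1 / m) + (1 - q) * ln (x2 / m) = q * ln x1 + (1 - q) * ln x2 - ln m"
    using m assms by (simp add: ln_div algebra_simps)
  moreover have "ln m = ln (q * x1 + (1 - q) * x2)" by (simp add: m_def)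
  ultimately show ?thesis by linarith
qed

lemma ln_chi2:
  assumes "0 \<le> q0" "q0 \<le> 1" "0 < q1" "q1 < 1" "(x1::real) > 0" "x2 > 0"
  shows "q0 * ln x1 + (1 - q0) * ln x2 \<le> (q0 - q1)^2 / (q1 * (1 - q1)) + ln (q1 * x1 + (1 - q1) * x2)"
proof -
  define m where "m = q1 * x1 + (1 - q1) * x2"
  have m: "m > 0" unfolding m_def using assms by (intro pos_comb) auto
  have key: "r * ln (x / m) \<le> r * (r / s - 1) + s * x / m - r"
    if "0 \<le> r" "0 < s" "x > 0" for r s x
  proof (cases "r = 0")
    case True then show ?thesis using that m by simp
  next
    case False
    then have r: "r > 0" using that by simp
    have "ln (x / m) = ln (s * x / (r * m)) + ln (r / s)"
      using r that m by (simp add: ln_div ln_mult)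
    also have "\<dots> \<le> (s * x / (r * m) - 1) + (r / s - 1)"
      using r that m by (intro add_mono ln_le_minus_one) auto
    finally have "r * ln (x / m) \<le> r * ((s * x / (r * m) - 1) + (r / s - 1))"
      using r by (simp add: mult_left_mono)
    also have "\<dots> = r * (r / s - 1) + s * x / m - r" using r m by (simp add: field_simps)
    finally show ?thesis .
  qed
  have k1: "q0 * ln (x1 / m) \<le> q0 * (q0 / q1 - 1) + q1 * x1 / m - q0"
    using key[of q0 q1 x1] assms by simp
  have k2: "(1 - q0) * ln (x2 / m) \<le> (1 - q0) * ((1 - q0) / (1 - q1) - 1) + (1 - q1) * x2 / m - (1 - q0)"
    using key[of "1 - q0" "1 - q1" x2] assms by simp
  have one: "q1 * x1 / m + (1 - q1) * x2 / m = 1" using m by (simp add: m_def add_divide_distrib[symmetric])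
  have chi: "q0 * (q0 / q1 - 1) + (1 - q0) * ((1 - q0) / (1 - q1) - 1) = (q0 - q1)^2 / (q1 * (1 - q1))"
    using assms by (simp add: field_simps power2_eq_square)
  have "q0 * ln (x1 / m) + (1 - q0) * ln (x2 / m) \<le> (q0 - q1)^2 / (q1 * (1 - q1))"
    using k1 k2 one chi by linarith

  moreover have "q0 * ln (x1 / m) + (1 - q0) * ln (x2 / m) = q0 * ln x1 + (1 - q0) * ln x2 - ln m"
    using m assms by (simp add: ln_div algebra_simps)
  moreover have "ln m = ln (q1 * x1 + (1 - q1) * x2)" by (simp add: m_def)
  ultimately show ?thesis by linarith
qed

lemma exp_neg_bound:
  assumes "0 \<le> (x::real)"
  shows "exp (- x) \<le> 1 - x + x^2 / 2"
proof -
  have pos: "1 - x + x^2/2 > 0"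
  proof -
    have "(x - 1)^2 \<ge> 0" by simp
    then show ?thesis by (simp add: power2_eq_square algebra_simps)
  qed
  have "1 + x + x^2 / 2 \<le> exp x" using exp_lower_Taylor_quadratic[OF assms] .
  moreover have "(1 - x + x^2/2) * (1 + x + x^2/2) \<ge> 1"
  proof -
    have "(1 - x + x^2/2) * (1 + x + x^2/2) = 1 + x^4/4" by (simp add: algebra_simps power2_eq_square power4_eq_xxxx)
    then show ?thesis by simp
  qed
  ultimately have "(1 - x + x^2/2) * exp x \<ge> 1"
    using pos by (smt (verit) mult_left_mono)
  then show ?thesis using pos by (simp add: exp_minus field_simps)
qed

lemma pinsker_tree:
  assumes k0: "kern d0" and k1: "kern d1"
    and step: "\<And>p x1 x2. x1 > 0 \<Longrightarrow> x2 > 0 \<Longrightarrow>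
       d0 p * ln x1 + (1 - d0 p) * ln x2 \<le> c p + ln (d1 p * x1 + (1 - d1 p) * x2)"
    and f: "\<And>h'. length h' = n \<Longrightarrow> 0 \<le> f h' \<and> f h' \<le> 1"
    and mu: "\<mu> > 0"
  shows "\<mu> * (Ev d1 pol n f [] - Ev d0 pol n f []) \<le> Cst d0 pol c n [] + \<mu>^2 / 2"
proof -
  define a where "a = Ev d0 pol n f []"
  define b where "b = Ev d1 pol n f []"
  have b01: "0 \<le> b" "b \<le> 1"
  proof -
    have "Ev d1 pol n (\<lambda>_. 0) [] \<le> b" unfolding b_def by (rule Ev_mono_len[OF k1]) (use f in auto)
    then show "0 \<le> b" by (simp add: Ev_const)
    have "b \<le> Ev d1 pol n (\<lambda>_. 1) []" unfolding b_def by (rule Ev_mono_len[OF k1]) (use f in auto)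
    then show "b \<le> 1" by (simp add: Ev_const)
  qed
  have DV': "Ev d0 pol n (\<lambda>h. - \<mu> * f h) [] \<le> Cst d0 pol c n [] + ln (Ev d1 pol n (\<lambda>h'. exp (- \<mu> * f h')) [])"
    by (rule DV[OF k0 k1 step])
  have l: "Ev d0 pol n (\<lambda>h. - \<mu> * f h) [] = - \<mu> * a"
    using Ev_lin[of d0 pol n "- \<mu>" f 0 f "[]"] by (simp add: a_def)
  have ex: "exp (- \<mu> * f h') \<le> 1 - f h' + f h' * exp (- \<mu>)" if "length h' = n" for h'
  proof -
    have fh: "0 \<le> f h'" "f h' \<le> 1" using f that by auto
    have "exp ((1 - f h') *\<^sub>R 0 + f h' *\<^sub>R (- \<mu>)) \<le> (1 - f h') * exp 0 + f h' * exp (- \<mu>)"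
      using fh by (intro convex_onD[OF exp_convex]) auto
    then show ?thesis by (simp add: mult.commute)
  qed
  have "Ev d1 pol n (\<lambda>h'. exp (- \<mu> * f h')) [] \<le> Ev d1 pol n (\<lambda>h'. 1 + ((- 1) * f h' + exp (- \<mu>) * f h')) []"
    by (rule Ev_mono_len[OF k1]) (use ex in \<open>auto simp: algebra_simps\<close>)
  also have "\<dots> = 1 - b + exp (- \<mu>) * b"
    using Ev_lin[of d1 pol n "-1" f "exp (- \<mu>)" f "[]"] by (simp add: Ev_add_const b_def)
  also have "\<dots> \<le> 1 - b + (1 - \<mu> + \<mu>^2/2) * b"
    using exp_neg_bound[of \<mu>] mu b01 by (simp add: mult_right_mono)
  also have "\<dots> \<le> 1 + (- b * \<mu> + \<mu>^2/2)"
  proof -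
    have "b * \<mu>^2 / 2 \<le> \<mu>^2 / 2" using b01 by (simp add: mult_left_le_one_le)
    then show ?thesis by (simp add: algebra_simps)
  qed
  also have "\<dots> \<le> exp (- b * \<mu> + \<mu>^2/2)" by (rule exp_ge_add_one_self)
  finally have E: "Ev d1 pol n (\<lambda>h'. exp (- \<mu> * f h')) [] \<le> exp (- b * \<mu> + \<mu>^2/2)" .
  have Epos: "Ev d1 pol n (\<lambda>h'. exp (- \<mu> * f h')) [] > 0" by (rule Ev_pos[OF k1]) simp
  have "ln (Ev d1 pol n (\<lambda>h'. exp (- \<mu> * f h')) []) \<le> - b * \<mu> + \<mu>^2/2"
    using E Epos by (metis ln_exp ln_le_cancel_iff exp_gt_zero)
  with DV' l have "- \<mu> * a \<le> Cst d0 pol c n [] + (- b * \<mu> + \<mu>^2/2)" by linarith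
  then show ?thesis by (simp add: a_def[symmetric] b_def[symmetric] algebra_simps)
qed




lemma hist_cong: "(\<And>s. s < t \<Longrightarrow> V s = V' s) \<Longrightarrow> hist pol V t = hist pol V' t"
  by (induction t) (auto simp: Let_def)

lemma hist_len[simp]: "length (hist pol V t) = t"
  by (induction t) (auto simp: Let_def)

lemma regret_csum: "regret Q pol V T = csum (gap Q) (hist pol V T)"
  by (induction T) (auto simp: regret_def Let_def)

lemma dem_01: "0 \<le> dem Q p" "dem Q p \<le> 1"
  by (auto simp: dem_def)

lemma kern_dem: "kern (dem Q)"
  by (auto simp: kern_def dem_01)

lemma Ev_nonneg: "kern d \<Longrightarrow> (\<And>h. F h \<ge> 0) \<Longrightarrow> Ev d pol n F h \<ge> 0"
  using Ev_mono_len[of d h n "\<lambda>_. 0" F pol] by (simp add: Ev_const)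

lemma inner_int:
  assumes "a \<ge> 0" "b \<ge> 0"
  shows "(\<integral>\<^sup>+y. ennreal (if p \<le> y then a else b) \<partial>measure_pmf Q) = ennreal (dem Q p * a + (1 - dem Q p) * b)"
proof -
  have "(\<integral>\<^sup>+y. ennreal (if p \<le> y then a else b) \<partial>measure_pmf Q) =
        (\<integral>\<^sup>+y. ennreal a * indicator {y. p \<le> y} y + ennreal b * indicator {y. \<not> p \<le> y} y \<partial>measure_pmf Q)"
    by (intro nn_integral_cong) (auto split: split_indicator)
  also have "\<dots> = ennreal a * emeasure Q {y. p \<le> y} + ennreal b * emeasure Q {y. \<not> p \<le> y}"
    by (simp add: nn_integral_add nn_integral_cmult_indicator)
  also have "emeasure Q {y. p \<le> y} = ennreal (dem Q p)"
    by (simp add: dem_def measure_pmf.emeasure_eq_measure)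
  also have "emeasure Q {y. \<not> p \<le> y} = ennreal (1 - dem Q p)"
  proof -
    have "{y. \<not> p \<le> y} = UNIV - {y. p \<le> y}" by auto
    then have "measure Q {y. \<not> p \<le> y} = 1 - dem Q p"
      using measure_pmf.prob_compl[where M=Q and A="{y. p \<le> y}"] by (simp add: dem_def)
    then show ?thesis by (simp add: measure_pmf.emeasure_eq_measure)
  qed
  finally show ?thesis using assms dem_01[of Q p]
    by (simp add: ennreal_mult'' ennreal_plus[symmetric] mult.commute)
qed

lemma lemmaA:
  "\<forall>F. (\<forall>h. F h \<ge> 0) \<longrightarrow>
     (\<integral>\<^sup>+V. ennreal (F (hist pol V t)) \<partial>measure_pmf (Pi_pmf {..<t} 0 (\<lambda>_. Q))) = ennreal (Ev (dem Q) pol t F [])"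
proof (induction t)
  case 0 then show ?case by simp
next
  case (Suc t)
  show ?case
  proof (intro allI impI)
    fix F :: "(real \<times> bool) list \<Rightarrow> real" assume F: "\<forall>h. F h \<ge> 0"
    define G where "G h = dem Q (pol h) * F (h @ [(pol h, True)]) + (1 - dem Q (pol h)) * F (h @ [(pol h, False)])" for h
    have G: "\<forall>h. G h \<ge> 0" using F dem_01 unfolding G_def by (auto intro!: add_nonneg_nonneg mult_nonneg_nonneg)
    have e: "Pi_pmf {..<Suc t} 0 (\<lambda>_. Q) = map_pmf (\<lambda>(y, f). f(t := y)) (pair_pmf Q (Pi_pmf {..<t} 0 (\<lambda>_. Q)))"
      using Pi_pmf_insert[of "{..<t}" t 0 "\<lambda>_. Q"] by (simp add: lessThan_Suc)
    have h: "hist pol (f(t := y)) (Suc t) = hist pol f t @ [(pol (hist pol f t), pol (hist pol f t) \<le> y)]" for f y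
    proof -
      have "hist pol (f(t := y)) t = hist pol f t" by (rule hist_cong) auto
      then show ?thesis by (simp add: Let_def)
    qed
    have "(\<integral>\<^sup>+V. ennreal (F (hist pol V (Suc t))) \<partial>measure_pmf (Pi_pmf {..<Suc t} 0 (\<lambda>_. Q)))
        = (\<integral>\<^sup>+x. ennreal (F (hist pol ((snd x)(t := fst x)) (Suc t))) \<partial>measure_pmf (pair_pmf Q (Pi_pmf {..<t} 0 (\<lambda>_. Q))))"
      by (simp add: e case_prod_beta)
    also have "\<dots> = (\<integral>\<^sup>+x. ennreal (F (hist pol ((fst x)(t := snd x)) (Suc t))) \<partial>measure_pmf (pair_pmf (Pi_pmf {..<t} 0 (\<lambda>_. Q)) Q))"
      by (subst pair_commute_pmf) (simp add: case_prod_beta)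
    also have "\<dots> = (\<integral>\<^sup>+f. \<integral>\<^sup>+y. ennreal (F (hist pol (f(t := y)) (Suc t))) \<partial>measure_pmf Q \<partial>measure_pmf (Pi_pmf {..<t} 0 (\<lambda>_. Q)))"
      by (simp add: nn_integral_pair_pmf')
    also have "\<dots> = (\<integral>\<^sup>+f. ennreal (G (hist pol f t)) \<partial>measure_pmf (Pi_pmf {..<t} 0 (\<lambda>_. Q)))"
    proof (intro nn_integral_cong)
      fix f
      have "(\<integral>\<^sup>+y. ennreal (F (hist pol (f(t := y)) (Suc t))) \<partial>measure_pmf Q)
          = (\<integral>\<^sup>+y. ennreal (if pol (hist pol f t) \<le> y then F (hist pol f t @ [(pol (hist pol f t), True)]) else F (hist pol f t @ [(pol (hist pol f t), False)])) \<partial>measure_pmf Q)"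
        by (intro nn_integral_cong) (simp only: h, simp)
      also have "\<dots> = ennreal (G (hist pol f t))"
        using F by (subst inner_int) (auto simp: G_def)
      finally show "(\<integral>\<^sup>+y. ennreal (F (hist pol (f(t := y)) (Suc t))) \<partial>measure_pmf Q) = ennreal (G (hist pol f t))" .
    qed
    also have "\<dots> = ennreal (Ev (dem Q) pol t G [])"
      using Suc.IH G by blast
    also have "Ev (dem Q) pol t G [] = Ev (dem Q) pol (Suc t) F []"
      unfolding Ev_last by (simp add: G_def[abs_def])
    finally show "(\<integral>\<^sup>+V. ennreal (F (hist pol V (Suc t))) \<partial>measure_pmf (Pi_pmf {..<Suc t} 0 (\<lambda>_. Q))) = ennreal (Ev (dem Q) pol (Suc t) F [])" .
  qed
qed

lemma expect_regret:
  assumes "\<And>h. F h \<ge> 0" "\<And>V. regret Q pol V T = F (hist pol V T)"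
  shows "measure_pmf.expectation (Pi_pmf {..<T} 0 (\<lambda>_. Q)) (\<lambda>V. regret Q pol V T) = Ev (dem Q) pol T F []"
proof -
  have "measure_pmf.expectation (Pi_pmf {..<T} 0 (\<lambda>_. Q)) (\<lambda>V. regret Q pol V T)
     = enn2real (\<integral>\<^sup>+V. ennreal (F (hist pol V T)) \<partial>measure_pmf (Pi_pmf {..<T} 0 (\<lambda>_. Q)))"
    using assms by (subst integral_eq_nn_integral) auto
  also have "\<dots> = Ev (dem Q) pol T F []"
    using lemmaA[where pol=pol and t=T and Q=Q] assms(1) Ev_nonneg[OF kern_dem, of F] by simp
  finally show ?thesis .
qed




definition w0 :: "nat \<Rightarrow> nat \<Rightarrow> real" where
  "w0 K i = (if i = K then 1/2 else 1 / (2 * real K - 2))"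

definition d0 :: "nat \<Rightarrow> real \<Rightarrow> real" where
  "d0 K p = (\<Sum>i\<in>{1..K}. if p \<le> val K i then w0 K i else 0)"

definition tl0 :: "nat \<Rightarrow> nat \<Rightarrow> real" where
  "tl0 K i = (\<Sum>i'\<in>{i..K}. w0 K i')"

lemma val_formula:
  assumes "K \<ge> 2" "1 \<le> i" "i \<le> K"
  shows "val K i = (real K - 1) / (2 * real K - 1 - real i)"
proof -
  have "real i \<le> real K" using assms by simp
  moreover have "real K \<ge> 2" using assms by simp
  ultimately have pos: "2 * real K - 1 - real i > 0" by linarith
  have "4 * real K - 2 * real i - 2 = 2 * (2 * real K - 1 - real i)" by simp
  then show ?thesis using pos unfolding val_def by (simp add: field_simps)
qed

lemma val_pos: "K \<ge> 2 \<Longrightarrow> 1 \<le> i \<Longrightarrow> i \<le> K \<Longrightarrow> val K i > 0"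
  by (simp add: val_formula)

lemma val_K: "K \<ge> 2 \<Longrightarrow> val K K = 1"
  by (simp add: val_formula)

lemma val_1: "K \<ge> 2 \<Longrightarrow> val K 1 = 1/2"
  by (simp add: val_def)

lemma val_mono:
  assumes "K \<ge> 2" "1 \<le> i" "i < i'" "i' \<le> K"
  shows "val K i < val K i'"
proof -
  have a: "2 * real K - 1 - real i' > 0" using assms by linarith
  have b: "2 * real K - 1 - real i' < 2 * real K - 1 - real i" using assms by simp
  have "(real K - 1) / (2 * real K - 1 - real i) < (real K - 1) / (2 * real K - 1 - real i')"
    using a b assms by (intro divide_strict_left_mono) auto
  then show ?thesis using assms by (simp add: val_formula)
qed

lemma val_mono_le:
  assumes "K \<ge> 2" "1 \<le> i" "i \<le> i'" "i' \<le> K"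
  shows "val K i \<le> val K i'"
  using val_mono[OF assms(1,2) _ assms(4), of ] assms by (cases "i = i'") (auto intro: less_imp_le)

lemma val_inj:
  assumes "K \<ge> 2" "i \<in> {1..K}" "i' \<in> {1..K}" "val K i = val K i'"
  shows "i = i'"
proof (rule ccontr)
  assume "i \<noteq> i'"
  then have "i < i' \<or> i' < i" by auto
  then show False using val_mono[OF assms(1)] assms by (metis atLeastAtMost_iff less_irrefl)
qed

lemma tl0_formula:
  assumes "K \<ge> 2" "1 \<le> i" "i \<le> K"
  shows "tl0 K i = (2 * real K - 1 - real i) / (2 * real K - 2)"
proof -
  have "{i..K} = insert K {i..<K}" using assms by auto
  then have "tl0 K i = w0 K K + (\<Sum>i'\<in>{i..<K}. w0 K i')" by (simp add: tl0_def)
  also have "(\<Sum>i'\<in>{i..<K}. w0 K i') = (\<Sum>i'\<in>{i..<K}. 1 / (2 * real K - 2))"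
    by (intro sum.cong) (auto simp: w0_def)
  also have "\<dots> = real (K - i) / (2 * real K - 2)" by simp
  finally show ?thesis using assms by (simp add: w0_def of_nat_diff field_simps)
qed

lemma val_tl0: "K \<ge> 2 \<Longrightarrow> 1 \<le> i \<Longrightarrow> i \<le> K \<Longrightarrow> val K i * tl0 K i = 1/2"
proof -
  assume a: "K \<ge> 2" "1 \<le> i" "i \<le> K"
  then have pos: "2 * real K - 1 - real i > 0" "2 * real K - 2 > 0" by linarith+
  have nz: "(2 * real K - 1 - real i) * (2 * real K - 2) \<noteq> 0" using pos by simp
  have "val K i * tl0 K i = ((real K - 1) / (2 * real K - 1 - real i)) * ((2 * real K - 1 - real i) / (2 * real K - 2))"
    using a by (simp add: val_formula tl0_formula)
  also have "\<dots> = 1/2" using pos nz by (simp add: field_simps)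
  finally show ?thesis .
qed

lemma w0_nonneg: "K \<ge> 2 \<Longrightarrow> w0 K i \<ge> 0"
  by (simp add: w0_def)

lemma d0_tail:
  assumes "K \<ge> 2" "1 \<le> i" "i \<le> K" "i = 1 \<or> val K (i - 1) < p" "p \<le> val K i"
  shows "d0 K p = tl0 K i"
proof -
  have S: "{i'\<in>{1..K}. p \<le> val K i'} = {i..K}"
  proof (intro set_eqI iffI)
    fix i' assume "i' \<in> {i'\<in>{1..K}. p \<le> val K i'}"
    then have i': "1 \<le> i'" "i' \<le> K" "p \<le> val K i'" by auto
    show "i' \<in> {i..K}"
    proof (rule ccontr)
      assume "i' \<notin> {i..K}"
      then have "i' < i" using i' by auto
      then have "i \<noteq> 1" "i' \<le> i - 1" using i' by auto
      then have "val K i' \<le> val K (i - 1)" using assms i' by (intro val_mono_le) auto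
      then show False using assms i' \<open>i \<noteq> 1\<close> by auto
    qed
  next
    fix i' assume "i' \<in> {i..K}"
    then have "1 \<le> i'" "i \<le> i'" "i' \<le> K" using assms by auto
    then have "val K i \<le> val K i'" using assms by (intro val_mono_le) auto
    then show "i' \<in> {i'\<in>{1..K}. p \<le> val K i'}" using assms \<open>1 \<le> i'\<close> \<open>i' \<le> K\<close> by auto
  qed
  have "d0 K p = (\<Sum>i'\<in>{i'\<in>{1..K}. p \<le> val K i'}. w0 K i')"
    unfolding d0_def by (rule sum.inter_filter[symmetric]) simp
  then show ?thesis using S by (simp add: tl0_def)
qed

lemma d0_nonneg: "K \<ge> 2 \<Longrightarrow> d0 K p \<ge> 0"
  unfolding d0_def by (intro sum_nonneg) (auto simp: w0_nonneg)

lemma d0_big: "K \<ge> 2 \<Longrightarrow> p > 1 \<Longrightarrow> d0 K p = 0"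
proof -
  assume a: "K \<ge> 2" "p > 1"
  have "val K i \<le> 1" if "i \<in> {1..K}" for i
    using val_mono_le[of K i K] a that val_K[of K] by auto
  then show ?thesis using a unfolding d0_def by (intro sum.neutral) force
qed

lemma d0_le1: "K \<ge> 2 \<Longrightarrow> d0 K p \<le> 1"
proof -
  assume a: "K \<ge> 2"
  have "d0 K p \<le> (\<Sum>i\<in>{1..K}. w0 K i)" unfolding d0_def by (intro sum_mono) (auto simp: w0_nonneg a)
  also have "\<dots> = tl0 K 1" by (simp add: tl0_def)
  also have "\<dots> = 1" using a by (simp add: tl0_formula)
  finally show ?thesis .
qed

lemma kern_d0: "K \<ge> 2 \<Longrightarrow> kern (d0 K)"
  by (simp add: kern_def d0_nonneg d0_le1)

lemma rev0_le:
  assumes "K \<ge> 2"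
  shows "p * d0 K p \<le> 1/2"
proof (cases "p \<le> 0")
  case True
  have "p * d0 K p \<le> 0" using True d0_nonneg[OF assms, of p] by (rule mult_nonpos_nonneg)
  then show ?thesis by linarith
next
  case False
  then have p: "p > 0" by simp
  show ?thesis
  proof (cases "p > 1")
    case True then show ?thesis using d0_big[OF assms] by simp
  next
    case False
    define i where "i = (LEAST i. 1 \<le> i \<and> p \<le> val K i)"
    have ex: "1 \<le> K \<and> p \<le> val K K" using False assms val_K[OF assms] by simp
    have i1: "1 \<le> i \<and> p \<le> val K i" unfolding i_def by (rule LeastI[of _ K]) (use ex in auto)
    have iK: "i \<le> K" unfolding i_def by (rule Least_le) (use ex in auto)
    have prev: "i = 1 \<or> val K (i - 1) < p"
    proof (rule ccontr)
      assume "\<not> (i = 1 \<or> val K (i - 1) < p)"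
      then have "1 \<le> i - 1 \<and> p \<le> val K (i - 1)" "i - 1 < i" using i1 by auto
      then show False using not_less_Least[of "i - 1" "\<lambda>i. 1 \<le> i \<and> p \<le> val K i", folded i_def] by blast
    qed
    have "d0 K p = tl0 K i" using d0_tail[OF assms] i1 iK prev by auto
    moreover have "tl0 K i \<ge> 0" using assms i1 iK by (simp add: tl0_formula)
    ultimately have "p * d0 K p \<le> val K i * tl0 K i" using i1 p by (simp add: mult_right_mono)
    also have "\<dots> = 1/2" using val_tl0 assms i1 iK by simp
    finally show ?thesis .
  qed
qed




definition Ij :: "nat \<Rightarrow> nat \<Rightarrow> real set" where
  "Ij K j = {p. val K (j - 1) < p \<and> p \<le> val K j}"

lemma T_pos: "K \<ge> 4 \<Longrightarrow> T \<ge> K^3 \<Longrightarrow> real T > 0"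
proof -
  assume a: "K \<ge> 4" "T \<ge> K^3"
  then have "K^3 > 0" by simp
  then have "T > 0" using a(2) by linarith
  then show ?thesis by simp
qed

lemma eps_sq: "K \<ge> 4 \<Longrightarrow> T \<ge> K^3 \<Longrightarrow> (eps K T)^2 = (real K - 2) / (216 * real T)"
proof -
  assume a: "K \<ge> 4" "T \<ge> K^3"
  have T: "real T > 0" using T_pos[OF a] .
  have K: "real K - 2 \<ge> 0" using a by simp
  have "(eps K T)^2 = (sqrt ((real K - 2) / real T))^2 / (3 * sqrt 24)^2"
    by (simp add: eps_def power_divide)
  also have "(sqrt ((real K - 2) / real T))^2 = (real K - 2) / real T" using K T by simp
  also have "(3 * sqrt 24)^2 = (216::real)" by (simp add: power_mult_distrib)
  finally show ?thesis by simp
qed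

lemma eps_pos: "K \<ge> 4 \<Longrightarrow> T \<ge> K^3 \<Longrightarrow> eps K T > 0"
  using T_pos by (simp add: eps_def)

lemma eps_small:
  assumes a: "K \<ge> 4" "T \<ge> K^3"
  shows "eps K T * (8 * real K - 8) \<le> 1"
proof -
  define k where "k = real K"
  define t where "t = real T"
  have T: "t > 0" using T_pos[OF a] by (simp add: t_def)
  have TK: "t \<ge> k ^ 3"
  proof -
    have "real (K^3) \<le> real T" using a(2) by (simp only: of_nat_le_iff)
    then show ?thesis unfolding k_def t_def by (simp only: of_nat_power)
  qed
  have K: "k \<ge> 4" using a by (simp add: k_def)
  have s1: "(8 * k - 8)^2 \<le> 64 * k^2"
  proof -
    have "(8 * k - 8)^2 \<le> (8 * k)^2" by (rule power_mono) (use K in auto)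
    then show ?thesis by (simp add: power_mult_distrib)
  qed
  have s2: "(k - 2) * (8 * k - 8)^2 \<le> k * (64 * k^2)"
    by (rule mult_mono) (use K s1 in auto)
  have s3: "k * (64 * k^2) \<le> 216 * t"
  proof -
    have "k * (64 * k^2) = 64 * k^3" by (simp add: power2_eq_square power3_eq_cube)
    also have "\<dots> \<le> 216 * k^3" using K by (intro mult_right_mono) auto
    also have "\<dots> \<le> 216 * t" using TK by linarith
    finally show ?thesis .
  qed
  have e2: "(eps K T)^2 = (k - 2) / (216 * t)" using eps_sq[OF a] unfolding k_def t_def .
  have "(eps K T * (8 * k - 8))^2 = (eps K T)^2 * (8 * k - 8)^2" by (rule power_mult_distrib)
  also have "\<dots> = (k - 2) * (8 * k - 8)^2 / (216 * t)" unfolding e2 by simp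
  also have "\<dots> \<le> 1"
  proof -
    have "(k - 2) * (8 * k - 8)^2 \<le> 216 * t" using s2 s3 by linarith
    moreover have "216 * t > 0" using T by simp
    ultimately show ?thesis by (simp only: divide_le_eq_1_pos)
  qed
  finally have "(eps K T * (8 * k - 8))^2 \<le> 1^2" by simp
  then have "eps K T * (8 * k - 8) \<le> 1" by (rule power2_le_imp_le) simp
  then show ?thesis by (simp add: k_def)
qed

lemma eps_small': "K \<ge> 4 \<Longrightarrow> T \<ge> K^3 \<Longrightarrow> eps K T \<le> (1/4) * (1 / (2 * real K - 2))"
proof -
  assume a: "K \<ge> 4" "T \<ge> K^3"
  have K: "real K \<ge> 4" using a by simp
  have e: "eps K T * (8 * real K - 8) \<le> 1" by (rule eps_small[OF a])
  have "8 * real K - 8 = 4 * (2 * real K - 2)" by simp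
  then have "eps K T * (4 * (2 * real K - 2)) \<le> 1" using e by simp
  then show ?thesis using K by (simp add: field_simps)
qed

lemma wt_decomp:
  assumes "K \<ge> 4" "j \<in> {2..K-1}"
  shows "wt K T j i = w0 K i + (if i = j then eps K T else 0) - (if i = j - 1 then eps K T else 0)"
  using assms by (auto simp: wt_def w0_def)

lemma sum_delta_nat: "finite S \<Longrightarrow> (\<Sum>i\<in>S. (if i = a then c else (0::real))) = (if a \<in> S then c else 0)"
  by (simp add: sum.delta)

lemma wt_sum:
  assumes "K \<ge> 4" "j \<in> {2..K-1}"
  shows "(\<Sum>i\<in>{1..K}. wt K T j i) = 1"
proof -
  have "(\<Sum>i\<in>{1..K}. wt K T j i) = (\<Sum>i\<in>{1..K}. w0 K i) + (\<Sum>i\<in>{1..K}. (if i = j then eps K T else 0)) - (\<Sum>i\<in>{1..K}. (if i = j - 1 then eps K T else 0))"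
    using wt_decomp[OF assms] by (simp add: sum.distrib sum_subtractf)
  also have "(\<Sum>i\<in>{1..K}. w0 K i) = tl0 K 1" by (simp add: tl0_def)
  also have "\<dots> = 1" using assms by (simp add: tl0_formula)
  moreover have "j \<le> K" "1 \<le> j - 1" "j - 1 \<le> K" using assms by auto
  ultimately show ?thesis by simp
qed

lemma wt_nonneg:
  assumes a: "K \<ge> 4" "T \<ge> K^3" "j \<in> {2..K-1}"
  shows "wt K T j i \<ge> 0"
proof -
  have e: "eps K T \<le> (1/4) * (1 / (2 * real K - 2))" using eps_small'[OF a(1,2)] .
  have K: "real K \<ge> 4" using a by simp
  have "1 / (2 * real K - 2) \<le> 1/2" using K by (simp add: field_simps)
  moreover have e2: "eps K T \<le> 1 / (2 * real K - 2)" using e K by (simp add: field_simps)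
  ultimately show ?thesis using e2 eps_pos[OF a(1,2)] K unfolding wt_def by auto
qed

definition fQ :: "nat \<Rightarrow> nat \<Rightarrow> nat \<Rightarrow> real \<Rightarrow> real" where
  "fQ K T j x = (\<Sum>i\<in>{1..K}. if val K i = x then wt K T j i else 0)"

lemma fQ_val:
  assumes "K \<ge> 4" "i \<in> {1..K}"
  shows "fQ K T j (val K i) = wt K T j i"
proof -
  have "fQ K T j (val K i) = (\<Sum>i'\<in>{1..K}. if i' = i then wt K T j i' else 0)"
    unfolding fQ_def using val_inj[of K] assms by (intro sum.cong) auto
  then show ?thesis using assms by (simp add: sum.delta)
qed

lemma fQ_nonneg: "K \<ge> 4 \<Longrightarrow> T \<ge> K^3 \<Longrightarrow> j \<in> {2..K-1} \<Longrightarrow> fQ K T j x \<ge> 0"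
  unfolding fQ_def by (intro sum_nonneg) (auto simp: wt_nonneg)

lemma fQ_out: "x \<notin> val K ` {1..K} \<Longrightarrow> fQ K T j x = 0"
  unfolding fQ_def by (intro sum.neutral) auto

lemma pmf_Qj:
  assumes a: "K \<ge> 4" "T \<ge> K^3" "j \<in> {2..K-1}"
  shows "pmf (Qj K T j) x = fQ K T j x"
proof -
  have inj: "inj_on (val K) {1..K}" using val_inj[of K] a by (auto simp: inj_on_def)
  have "(\<integral>\<^sup>+x. ennreal (fQ K T j x) \<partial>count_space UNIV) = (\<Sum>x\<in>val K ` {1..K}. ennreal (fQ K T j x))"
    by (intro nn_integral_count_space') (auto simp: fQ_out)
  also have "\<dots> = (\<Sum>i\<in>{1..K}. ennreal (fQ K T j (val K i)))"
    using inj by (simp add: sum.reindex)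
  also have "\<dots> = (\<Sum>i\<in>{1..K}. ennreal (wt K T j i))"
    using a by (intro sum.cong) (auto simp: fQ_val)
  also have "\<dots> = ennreal (\<Sum>i\<in>{1..K}. wt K T j i)"
    using a wt_nonneg by (intro sum_ennreal) auto
  also have "\<dots> = 1" using wt_sum a by simp
  finally have "(\<integral>\<^sup>+x. ennreal (fQ K T j x) \<partial>count_space UNIV) = 1" .
  then show ?thesis unfolding Qj_def fQ_def[symmetric]
    using fQ_nonneg[OF a] by (subst pmf_embed_pmf) auto
qed

lemma dem_Qj:
  assumes a: "K \<ge> 4" "T \<ge> K^3" "j \<in> {2..K-1}"
  shows "dem (Qj K T j) p = (\<Sum>i\<in>{1..K}. if p \<le> val K i then wt K T j i else 0)"
proof -
  have inj: "inj_on (val K) {1..K}" using val_inj[of K] a by (auto simp: inj_on_def)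
  have "dem (Qj K T j) p = measure_pmf.expectation (Qj K T j) (indicator {v. p \<le> v})"
    unfolding dem_def by simp
  also have "\<dots> = (\<Sum>x\<in>val K ` {1..K}. indicator {v. p \<le> v} x * pmf (Qj K T j) x)"
  proof (rule integral_measure_pmf_real)
    fix x assume "x \<in> set_pmf (Qj K T j)" "indicator {v. p \<le> v} x \<noteq> (0::real)"
    then have "fQ K T j x \<noteq> 0" using pmf_Qj[OF a] by (simp add: set_pmf_eq)
    then show "x \<in> val K ` {1..K}" using fQ_out by blast
  qed simp
  also have "\<dots> = (\<Sum>i\<in>{1..K}. indicator {v. p \<le> v} (val K i) * pmf (Qj K T j) (val K i))"
    using inj by (simp only: sum.reindex[OF inj] o_def)
  also have "\<dots> = (\<Sum>i\<in>{1..K}. if p \<le> val K i then wt K T j i else 0)"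
    using a by (intro sum.cong) (auto simp: pmf_Qj fQ_val)
  finally show ?thesis .
qed

lemma dem_Qj_d0:
  assumes a: "K \<ge> 4" "T \<ge> K^3" "j \<in> {2..K-1}"
  shows "dem (Qj K T j) p = d0 K p + (if p \<in> Ij K j then eps K T else 0)"
proof -
  have "dem (Qj K T j) p = (\<Sum>i\<in>{1..K}. (if p \<le> val K i then w0 K i else 0) + ((if i = j \<and> p \<le> val K i then eps K T else 0) - (if i = j - 1 \<and> p \<le> val K i then eps K T else 0)))"
    unfolding dem_Qj[OF a] using wt_decomp[OF a(1,3)] by (intro sum.cong) auto
  also have "\<dots> = d0 K p + ((if p \<le> val K j then eps K T else 0) - (if p \<le> val K (j - 1) then eps K T else 0))"
  proof -
    have B: "(\<Sum>i\<in>{1..K}. if i = j' \<and> p \<le> val K i then eps K T else 0) = (if p \<le> val K j' then eps K T else 0)"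
      if "j' \<in> {1..K}" for j'
    proof -
      have "(\<Sum>i\<in>{1..K}. if i = j' \<and> p \<le> val K i then eps K T else 0) = (\<Sum>i\<in>{1..K}. if i = j' then (if p \<le> val K j' then eps K T else 0) else 0)"
        by (intro sum.cong) auto
      also have "\<dots> = (if p \<le> val K j' then eps K T else 0)" using that by (simp only: sum.delta finite_atLeastAtMost if_True)
      finally show ?thesis .
    qed
    have j: "j \<in> {1..K}" "j - 1 \<in> {1..K}" using a by auto
    show ?thesis
      by (simp only: sum.distrib sum_subtractf B[OF j(1)] B[OF j(2)] d0_def)
  qed
  also have "(if p \<le> val K j then eps K T else 0) - (if p \<le> val K (j - 1) then eps K T else 0) = (if p \<in> Ij K j then eps K T else 0)"
  proof -
    have "val K (j - 1) < val K j" using a by (intro val_mono) auto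
    then show ?thesis by (auto simp: Ij_def)
  qed
  finally show ?thesis .
qed




lemma rev_bdd: "bdd_above (rev Q ` {0..1})"
proof (rule bdd_aboveI)
  fix y assume "y \<in> rev Q ` {0..1}"
  then obtain x where x: "x \<in> {0..1}" "y = rev Q x" by auto
  have "x * dem Q x \<le> 1 * 1" using x dem_01[of Q x] by (intro mult_mono) auto
  then show "y \<le> 1" using x by (simp add: rev_def)
qed

lemma val_j_facts:
  assumes a: "K \<ge> 4" "j \<in> {2..K-1}"
  shows "val K (j - 1) < val K j" "val K j \<le> 1" "val K j \<ge> 1/2" "val K (j - 1) > 0"
proof -
  show "val K (j - 1) < val K j" using a by (intro val_mono) auto
  show "val K j \<le> 1" using val_mono_le[of K j K] val_K[of K] a by auto
  have "val K 1 \<le> val K j" using a by (intro val_mono_le) auto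
  then show "val K j \<ge> 1/2" using val_1[of K] a by simp
  show "val K (j - 1) > 0" using a by (intro val_pos) auto
qed

lemma d0_on_Ij:
  assumes a: "K \<ge> 4" "j \<in> {2..K-1}" "p \<in> Ij K j"
  shows "d0 K p = tl0 K j"
  using a by (intro d0_tail) (auto simp: Ij_def)

lemma rev_valj:
  assumes a: "K \<ge> 4" "T \<ge> K^3" "j \<in> {2..K-1}"
  shows "rev (Qj K T j) (val K j) = 1/2 + eps K T * val K j"
proof -
  have inI: "val K j \<in> Ij K j" using val_j_facts[OF a(1,3)] by (simp add: Ij_def)
  have "rev (Qj K T j) (val K j) = val K j * (tl0 K j + eps K T)"
    using inI by (simp add: rev_def dem_Qj_d0[OF a] d0_on_Ij[OF a(1,3) inI])
  also have "\<dots> = val K j * tl0 K j + eps K T * val K j" by (simp add: algebra_simps)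
  also have "val K j * tl0 K j = 1/2" using a by (intro val_tl0) auto
  finally show ?thesis .
qed

lemma gap_lb:
  assumes a: "K \<ge> 4" "T \<ge> K^3" "j \<in> {2..K-1}"
  shows "gap (Qj K T j) p \<ge> (eps K T / 2) * (if p \<in> Ij K j then 0 else 1)"
proof -
  define OPT where "OPT = (SUP x\<in>{0..1}. rev (Qj K T j) x)"
  have up: "rev (Qj K T j) x \<le> OPT" if "x \<in> {0..1}" for x
    unfolding OPT_def by (rule cSUP_upper[OF that rev_bdd])
  have vj: "val K j \<in> {0..1}" using val_j_facts[OF a(1,3)] by auto
  have opt: "OPT \<ge> 1/2 + eps K T * val K j" using up[OF vj] rev_valj[OF a] by simp
  show ?thesis
  proof (cases "p \<in> Ij K j")
    case True
    then have "p \<in> {0..1}" using val_j_facts[OF a(1,3)] by (auto simp: Ij_def)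
    then show ?thesis using up True by (simp add: gap_def OPT_def[symmetric])
  next
    case False
    have "rev (Qj K T j) p = p * d0 K p" using False by (simp add: rev_def dem_Qj_d0[OF a])
    also have "\<dots> \<le> 1/2" using a by (intro rev0_le) auto
    finally have r: "rev (Qj K T j) p \<le> 1/2" .
    have "eps K T * val K j \<ge> eps K T * (1/2)"
      using val_j_facts[OF a(1,3)] eps_pos[OF a(1,2)] by (intro mult_left_mono) auto
    then show ?thesis using False r opt by (simp add: gap_def OPT_def[symmetric])
  qed
qed

definition gam :: "nat \<Rightarrow> nat \<Rightarrow> real" where
  "gam K j = 2 * (real K - 1) * (real K - 2) / (81 * (real j - 1))"

definition cj :: "nat \<Rightarrow> nat \<Rightarrow> nat \<Rightarrow> real \<Rightarrow> real" where
  "cj K T j p = (if p \<in> Ij K j then gam K j / real T else 0)"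

lemma chi_bound:
  assumes a: "K \<ge> 4" "T \<ge> K^3" "j \<in> {2..K-1}"
  defines "q0 \<equiv> (2 * real K - 1 - real j) / (2 * real K - 2)"
  defines "q1 \<equiv> q0 + eps K T"
  shows "0 < q1" "q1 < 1" "(q0 - q1)^2 / (q1 * (1 - q1)) \<le> gam K j / real T"
proof -
  define r where "r = 2 * real K - 2"
  define e where "e = eps K T"
  have K: "real K \<ge> 4" using a by simp
  have j: "real j \<ge> 2" "real j \<le> real K - 1" using a by auto
  have r: "r > 0" using K by (simp add: r_def)
  have e: "e > 0" "e \<le> (1/4) * (1 / r)" using eps_pos[OF a(1,2)] eps_small'[OF a(1,2)] by (simp_all add: e_def r_def)
  have omq0: "1 - q0 = (real j - 1) / r" using r by (simp add: q0_def r_def field_simps)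
  have q0h: "q0 \<ge> 1/2" using r j by (simp add: q0_def r_def field_simps)
  have om: "1 - q1 \<ge> (3/4) * ((real j - 1) / r)"
  proof -
    have "e \<le> (1/4) * ((real j - 1) / r)"
    proof -
      have "1 / r \<le> (real j - 1) / r" using j r by (intro divide_right_mono) auto
      then show ?thesis using e(2) by linarith
    qed
    then show ?thesis using omq0 unfolding q1_def e_def[symmetric] by linarith
  qed
  have jr: "(real j - 1) / r > 0" using j r by simp
  show q1p: "0 < q1" using q0h e by (simp add: q1_def e_def[symmetric])
  show "q1 < 1" using om jr by linarith
  have prod: "q1 * (1 - q1) \<ge> (1/2) * ((3/4) * ((real j - 1) / r))"
  proof -
    have q1h: "1/2 \<le> q1" using q0h e unfolding q1_def e_def[symmetric] by linarith
    have c0: "0 \<le> (3/4) * ((real j - 1) / r)" using jr by (intro mult_nonneg_nonneg) auto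
    show ?thesis by (rule mult_mono[OF q1h om _ c0]) (use q1h in linarith)
  qed
  have pp: "(1/2) * ((3/4) * ((real j - 1) / r)) > 0" using jr by (intro mult_pos_pos) auto
  have "(q0 - q1)^2 / (q1 * (1 - q1)) = e^2 / (q1 * (1 - q1))" by (simp add: q1_def e_def)
  also have "\<dots> \<le> e^2 / ((1/2) * ((3/4) * ((real j - 1) / r)))"
  proof -
    have qq: "q1 * (1 - q1) > 0" using prod pp by linarith
    show ?thesis by (rule divide_left_mono[OF prod]) (simp, rule mult_pos_pos[OF qq pp])
  qed
  also have "e^2 = (real K - 2) / (216 * real T)" using eps_sq[OF a(1,2)] by (simp add: e_def)
  also have "(real K - 2) / (216 * real T) / ((1/2) * ((3/4) * ((real j - 1) / r))) = gam K j / real T"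
    using j r T_pos[OF a(1,2)] by (simp add: gam_def r_def field_simps)
  finally show "(q0 - q1)^2 / (q1 * (1 - q1)) \<le> gam K j / real T" .
qed

lemma step_cond:
  assumes a: "K \<ge> 4" "T \<ge> K^3" "j \<in> {2..K-1}" and x: "x1 > 0" "x2 > 0"
  shows "d0 K p * ln x1 + (1 - d0 K p) * ln x2 \<le> cj K T j p + ln (dem (Qj K T j) p * x1 + (1 - dem (Qj K T j) p) * x2)"
proof (cases "p \<in> Ij K j")
  case False
  then show ?thesis using ln_jensen2[OF d0_nonneg d0_le1 x] a
    by (simp add: cj_def dem_Qj_d0[OF a])
next
  case True
  have q0: "d0 K p = (2 * real K - 1 - real j) / (2 * real K - 2)"
    using d0_on_Ij[OF a(1,3) True] a tl0_formula[of K j] by auto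
  have "d0 K p * ln x1 + (1 - d0 K p) * ln x2 \<le> (d0 K p - (d0 K p + eps K T))^2 / ((d0 K p + eps K T) * (1 - (d0 K p + eps K T))) + ln ((d0 K p + eps K T) * x1 + (1 - (d0 K p + eps K T)) * x2)"
    using chi_bound(1,2)[OF a] a by (intro ln_chi2 d0_nonneg d0_le1 x) (auto simp: q0)
  also have "(d0 K p - (d0 K p + eps K T))^2 / ((d0 K p + eps K T) * (1 - (d0 K p + eps K T))) \<le> gam K j / real T"
    using chi_bound(3)[OF a] by (simp add: q0)
  finally show ?thesis using True by (simp add: cj_def dem_Qj_d0[OF a])
qed




lemma csum_Cons[simp]: "csum c (x # h) = c (fst x) + csum c h"
  by (simp add: csum_def)

lemma csum_mono: "(\<And>p. c p \<le> c' p) \<Longrightarrow> csum c h \<le> csum c' h"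
  by (induction h) (auto intro: add_mono)

lemma csum_nonneg: "(\<And>p. c p \<ge> 0) \<Longrightarrow> csum c h \<ge> 0"
  by (induction h) auto

lemma csum_lin: "csum (\<lambda>p. a * c p + b * c' p) h = a * csum c h + b * csum c' h"
  by (induction h) (auto simp: algebra_simps)

lemma csum_const: "csum (\<lambda>p. a) h = a * real (length h)"
  by (induction h) (auto simp: algebra_simps)

lemma csum_sum: "finite S \<Longrightarrow> csum (\<lambda>p. \<Sum>j\<in>S. f j p) h = (\<Sum>j\<in>S. csum (f j) h)"
  by (induction h) (auto simp: sum.distrib)

definition Nj :: "nat \<Rightarrow> nat \<Rightarrow> (real \<times> bool) list \<Rightarrow> real" where
  "Nj K j h = csum (\<lambda>p. if p \<in> Ij K j then 1 else 0) h"

lemma Nj_bounds: "0 \<le> Nj K j h" "Nj K j h \<le> real (length h)"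
proof -
  show "0 \<le> Nj K j h" unfolding Nj_def by (rule csum_nonneg) auto
  have "Nj K j h \<le> csum (\<lambda>p. 1) h" unfolding Nj_def by (rule csum_mono) auto
  then show "Nj K j h \<le> real (length h)" by (simp add: csum_const)
qed

lemma Ij_disj:
  assumes "K \<ge> 4" "j \<in> {2..K-1}" "j' \<in> {2..K-1}" "j < j'" "p \<in> Ij K j"
  shows "p \<notin> Ij K j'"
proof -
  have "val K j \<le> val K (j' - 1)" using assms by (intro val_mono_le) auto
  then show ?thesis using assms by (auto simp: Ij_def)
qed

lemma sum_ind_le1:
  assumes "K \<ge> 4"
  shows "(\<Sum>j\<in>{2..K-1}. (if p \<in> Ij K j then 1 else 0)) \<le> (1::real)"
proof -
  let ?S = "{j\<in>{2..K-1}. p \<in> Ij K j}"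
  have "(\<Sum>j\<in>{2..K-1}. (if p \<in> Ij K j then 1 else 0)) = real (card ?S)"
  proof -
    have "{2..K-1} \<inter> {j. p \<in> Ij K j} = ?S" by auto
    then show ?thesis by (simp add: sum.If_cases)
  qed
  moreover have "card ?S \<le> Suc 0"
  proof (subst card_le_Suc0_iff_eq)
    show "finite ?S" by simp
    show "\<forall>x\<in>?S. \<forall>y\<in>?S. x = y"
    proof (intro ballI)
      fix x y assume x: "x \<in> ?S" and y: "y \<in> ?S"
      show "x = y"
      proof (rule ccontr)
        assume "x \<noteq> y"
        then have "x < y \<or> y < x" by auto
        then show False using Ij_disj[OF assms] x y by blast
      qed
    qed
  qed
  ultimately show ?thesis by simp
qed

lemma sum_Nj_le: "K \<ge> 4 \<Longrightarrow> (\<Sum>j\<in>{2..K-1}. Nj K j h) \<le> real (length h)"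
proof -
  assume K: "K \<ge> 4"
  have "(\<Sum>j\<in>{2..K-1}. Nj K j h) = csum (\<lambda>p. \<Sum>j\<in>{2..K-1}. (if p \<in> Ij K j then 1 else 0)) h"
    unfolding Nj_def by (simp add: csum_sum)
  also have "\<dots> \<le> csum (\<lambda>p. 1) h" by (rule csum_mono) (rule sum_ind_le1[OF K])
  finally show ?thesis by (simp add: csum_const)
qed

lemma sum_theta: "(\<Sum>j\<in>{2..m+1}. (real j - 1)) = real m * (real m + 1) / 2"
proof (induction m)
  case 0 then show ?case by simp
next
  case (Suc m)
  have "{2..Suc m + 1} = insert (m + 2) {2..m+1}" by auto
  then show ?case using Suc by (simp add: field_simps)
qed


lemma Ev_scale: "Ev d pol n (\<lambda>h. a * F h) h0 = a * Ev d pol n F h0"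
  by (induction n arbitrary: h0) (simp_all add: algebra_simps)

lemma per_j:
  fixes pol :: policy
  assumes a: "K \<ge> 4" "T \<ge> K^3" "j \<in> {2..K-1}"
  defines "aa \<equiv> Ev (d0 K) pol T (\<lambda>h. Nj K j h / real T) []"
  defines "bb \<equiv> Ev (dem (Qj K T j)) pol T (\<lambda>h. Nj K j h / real T) []"
  shows "measure_pmf.expectation (Pi_pmf {..<T} 0 (\<lambda>_. Qj K T j)) (\<lambda>V. regret (Qj K T j) pol V T) \<ge> (eps K T * real T / 2) * (1 - bb)"
    and "0 \<le> aa" "bb \<le> 1" "bb - aa \<le> (81/26) * gam K j * aa + 13/81"
proof -
  let ?Q = "Qj K T j"
  let ?dj = "dem ?Q"
  have T: "real T > 0" using T_pos[OF a(1,2)] .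
  have e: "eps K T > 0" using eps_pos[OF a(1,2)] .
  have gap0: "gap ?Q p \<ge> 0" for p
  proof -
    have "(eps K T / 2) * (if p \<in> Ij K j then 0 else 1) \<ge> 0" using e by simp
    then show ?thesis using gap_lb[OF a, of p] by linarith
  qed
  have ER: "measure_pmf.expectation (Pi_pmf {..<T} 0 (\<lambda>_. ?Q)) (\<lambda>V. regret ?Q pol V T) = Ev ?dj pol T (csum (gap ?Q)) []"
    by (rule expect_regret) (auto intro: csum_nonneg gap0 simp: regret_csum)
  have pw: "csum (gap ?Q) h \<ge> eps K T * real T / 2 + (- (eps K T * real T / 2)) * (Nj K j h / real T)"
    if "length h = T" for h
  proof -
    have "csum (\<lambda>p. (eps K T / 2) * 1 + (- (eps K T / 2)) * (if p \<in> Ij K j then 1 else 0)) h \<le> csum (gap ?Q) h"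
    proof (rule csum_mono)
      fix p
      show "(eps K T / 2) * 1 + (- (eps K T / 2)) * (if p \<in> Ij K j then 1 else 0) \<le> gap ?Q p"
        using gap_lb[OF a, of p] by (cases "p \<in> Ij K j") auto
    qed
    also have "csum (\<lambda>p. (eps K T / 2) * 1 + (- (eps K T / 2)) * (if p \<in> Ij K j then 1 else 0)) h
        = eps K T / 2 * real (length h) - eps K T / 2 * Nj K j h"
      unfolding Nj_def by (subst csum_lin) (simp add: csum_const)
    moreover have "(eps K T * real T / 2) * (Nj K j h / real T) = eps K T / 2 * Nj K j h"
      using T by simp
    ultimately show ?thesis using that by simp
  qed
  have "Ev ?dj pol T (\<lambda>h. eps K T * real T / 2 + (- (eps K T * real T / 2)) * (Nj K j h / real T)) [] \<le> Ev ?dj pol T (csum (gap ?Q)) []"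
    by (rule Ev_mono_len[OF kern_dem]) (use pw in simp)
  moreover have "Ev ?dj pol T (\<lambda>h. eps K T * real T / 2 + (- (eps K T * real T / 2)) * (Nj K j h / real T)) [] = (eps K T * real T / 2) * (1 - bb)"
  proof -
    have "Ev ?dj pol T (\<lambda>h. eps K T * real T / 2 + (- (eps K T * real T / 2)) * (Nj K j h / real T)) [] = eps K T * real T / 2 + (- (eps K T * real T / 2)) * bb"
      unfolding bb_def by (simp only: Ev_add_const Ev_scale)
    then show ?thesis by (simp add: algebra_simps)
  qed
  ultimately show "measure_pmf.expectation (Pi_pmf {..<T} 0 (\<lambda>_. ?Q)) (\<lambda>V. regret ?Q pol V T) \<ge> (eps K T * real T / 2) * (1 - bb)"
    using ER by simp
  have f: "0 \<le> Nj K j h / real T \<and> Nj K j h / real T \<le> 1" if "length h = T" for h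
    using Nj_bounds[of K j h] that T by auto
  show "0 \<le> aa" unfolding aa_def using Nj_bounds T a
    by (intro Ev_nonneg kern_d0) auto
  have "bb \<le> Ev ?dj pol T (\<lambda>_. 1) []" unfolding bb_def
    by (rule Ev_mono_len[OF kern_dem]) (use f in simp)
  then show "bb \<le> 1" by (simp add: Ev_const)
  have P: "(26/81) * (bb - aa) \<le> Cst (d0 K) pol (cj K T j) T [] + (26/81)^2 / 2"
    unfolding aa_def bb_def
  proof (rule pinsker_tree)
    show "kern (d0 K)" using a by (intro kern_d0) auto
    show "kern ?dj" by (rule kern_dem)
    show "\<And>p x1 x2. x1 > 0 \<Longrightarrow> x2 > 0 \<Longrightarrow> d0 K p * ln x1 + (1 - d0 K p) * ln x2 \<le> cj K T j p + ln (?dj p * x1 + (1 - ?dj p) * x2)"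
      by (rule step_cond[OF a])
    show "\<And>h'. length h' = T \<Longrightarrow> 0 \<le> Nj K j h' / real T \<and> Nj K j h' / real T \<le> 1" by (rule f)
  qed simp
  have cs: "csum (cj K T j) h = gam K j * (Nj K j h / real T)" for h
  proof -
    have "cj K T j = (\<lambda>p. (gam K j / real T) * (if p \<in> Ij K j then 1 else 0) + 0 * (if p \<in> Ij K j then 1 else 0))"
      by (auto simp: cj_def fun_eq_iff)
    then have "csum (cj K T j) h = (gam K j / real T) * Nj K j h"
      unfolding Nj_def by (simp only: csum_lin)
    then show ?thesis by simp
  qed
  have "Cst (d0 K) pol (cj K T j) T [] = Ev (d0 K) pol T (csum (cj K T j)) []"
    using Cst_Ev[of "d0 K" pol "cj K T j" T "[]"] by simp
  also have "\<dots> = gam K j * aa" unfolding aa_def cs by (rule Ev_scale)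
  finally have "(26/81) * (bb - aa) \<le> gam K j * aa + (26/81)^2 / 2" using P by simp
  then have "(81/26) * ((26/81) * (bb - aa)) \<le> (81/26) * (gam K j * aa + (26/81)^2 / 2)"
    by (rule mult_left_mono) simp
  moreover have "(81/26) * ((26/81) * (bb - aa)) = bb - aa" by simp
  moreover have "(81/26) * (gam K j * aa + (26/81)^2 / 2) = (81/26) * gam K j * aa + 13/81"
    by (simp add: power2_eq_square algebra_simps)
  ultimately show "bb - aa \<le> (81/26) * gam K j * aa + 13/81" by simp
qed




lemma sum_a_le1:
  fixes pol :: policy
  assumes a: "K \<ge> 4" "T \<ge> K^3"
  shows "(\<Sum>j\<in>{2..K-1}. Ev (d0 K) pol T (\<lambda>h. Nj K j h / real T) []) \<le> 1"
proof -
  have T: "real T > 0" using T_pos[OF a] .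
  have "(\<Sum>j\<in>{2..K-1}. Ev (d0 K) pol T (\<lambda>h. Nj K j h / real T) []) = Ev (d0 K) pol T (\<lambda>h. \<Sum>j\<in>{2..K-1}. Nj K j h / real T) []"
    by (rule Ev_sum[symmetric]) simp
  also have "\<dots> \<le> Ev (d0 K) pol T (\<lambda>_. 1) []"
  proof (rule Ev_mono_len)
    show "kern (d0 K)" using a by (intro kern_d0) auto
    fix h' :: "(real \<times> bool) list" assume l: "length h' = length [] + T"
    have "(\<Sum>j\<in>{2..K-1}. Nj K j h' / real T) = (\<Sum>j\<in>{2..K-1}. Nj K j h') / real T"
      by (simp add: sum_divide_distrib)
    also have "\<dots> \<le> real (length h') / real T" using sum_Nj_le[OF a(1), of h'] T by (intro divide_right_mono) auto
    also have "\<dots> = 1" using l T by simp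
    finally show "(\<Sum>j\<in>{2..K-1}. Nj K j h' / real T) \<le> 1" .
  qed
  also have "\<dots> = 1" by (simp add: Ev_const)
  finally show ?thesis .
qed

lemma b_bound:
  assumes K: "K \<ge> 4" and j: "j \<in> {2..K-1}"
    and b1: "bb \<le> 1" and a0: "0 \<le> aa" and ba: "bb - aa \<le> (81/26) * gam K j * aa + 13/81"
  shows "bb \<le> 1 - (68/81) * ((real j - 1) / (real K - 2)) + (1 + (real K - 1) / 13) * aa"
proof -
  define th where "th = (real j - 1) / (real K - 2)"
  have jr: "real j \<ge> 2" "real j \<le> real K - 1" using j K by auto
  have Kr: "real K \<ge> 4" using K by simp
  have th0: "0 \<le> th" "th \<le> 1" using jr Kr by (auto simp: th_def field_simps)
  have tg: "th * gam K j = 2 * (real K - 1) / 81"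
  proof -
    define u where "u = real j - 1"
    define v where "v = real K - 2"
    have u: "u > 0" and v: "v > 0" using jr Kr by (auto simp: u_def v_def)
    have "th * gam K j = u / v * (2 * (real K - 1) * v / (81 * u))"
      by (simp add: th_def gam_def u_def v_def)
    also have "\<dots> = 2 * (real K - 1) / 81" using u v by (simp add: field_simps)
    finally show ?thesis .
  qed
  have "bb = (1 - th) * bb + th * bb" by (simp add: algebra_simps)
  also have "\<dots> \<le> (1 - th) * 1 + th * (aa + (81/26) * gam K j * aa + 13/81)"
    using th0 b1 ba by (intro add_mono mult_left_mono) auto
  also have "th * (aa + (81/26) * gam K j * aa + 13/81) = th * aa + (81/26) * (th * gam K j) * aa + 13/81 * th"
    by (simp add: algebra_simps)
  also have "(81/26) * (th * gam K j) * aa = (real K - 1) / 13 * aa" unfolding tg by simp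
  also have "th * aa \<le> aa" using th0 a0 by (simp add: mult_left_le_one_le)
  finally have "bb \<le> 1 - th + aa + (real K - 1) / 13 * aa + 13/81 * th" by simp
  then show ?thesis by (simp add: th_def[symmetric] algebra_simps)
qed

lemma main_bound:
  fixes pol :: policy
  assumes a: "K \<ge> 4" "T \<ge> K^3"
  shows "exp_regret K T pol \<ge> sqrt (real K * real T) / 4200"
proof -
  define J where "J = {2..K-1}"
  define n where "n = real K - 2"
  define aa where "aa j = Ev (d0 K) pol T (\<lambda>h. Nj K j h / real T) []" for j
  define bb where "bb j = Ev (dem (Qj K T j)) pol T (\<lambda>h. Nj K j h / real T) []" for j
  define E where "E j = measure_pmf.expectation (Pi_pmf {..<T} 0 (\<lambda>_. Qj K T j)) (\<lambda>V. regret (Qj K T j) pol V T)" for j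
  have T: "real T > 0" using T_pos[OF a] .
  have e: "eps K T > 0" using eps_pos[OF a] .
  have Kr: "real K \<ge> 4" using a by simp
  have cardJ: "real (card J) = n" using a by (simp add: J_def n_def of_nat_diff)
  have Jne: "J \<noteq> {}" "finite J" using a by (auto simp: J_def)
  have ER: "exp_regret K T pol = (\<Sum>j\<in>J. E j) / n"
  proof -
    have "exp_regret K T pol = measure_pmf.expectation (pmf_of_set J) E"
      unfolding exp_regret_def J_def E_def by (rule refl)
    also have "\<dots> = (\<Sum>j\<in>J. E j) / real (card J)" using Jne by (rule integral_pmf_of_set)
    finally show ?thesis using cardJ by simp
  qed
  have Ej: "E j \<ge> (eps K T * real T / 2) * (1 - bb j)" if "j \<in> J" for j
    using per_j(1)[OF a, of j pol] that by (simp add: E_def bb_def J_def)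
  have bj: "bb j \<le> 1 - (68/81) * ((real j - 1) / (real K - 2)) + (1 + (real K - 1) / 13) * aa j" if "j \<in> J" for j
    using that per_j(2-4)[OF a, of j pol] by (intro b_bound[OF a(1)]) (auto simp: aa_def bb_def J_def)
  have sa: "(\<Sum>j\<in>J. aa j) \<le> 1" using sum_a_le1[OF a, of pol] by (simp add: aa_def J_def)
  have sa0: "(\<Sum>j\<in>J. aa j) \<ge> 0" using per_j(2)[OF a, of _ pol] by (auto intro!: sum_nonneg simp: aa_def J_def)
  have sth: "(\<Sum>j\<in>J. (real j - 1) / (real K - 2)) = (n + 1) / 2"
  proof -
    have "J = {2..(K - 2) + 1}" using a by (auto simp: J_def)
    then have "(\<Sum>j\<in>J. (real j - 1)) = real (K - 2) * (real (K - 2) + 1) / 2" by (simp only: sum_theta)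
    also have "real (K - 2) = n" using a by (simp add: n_def of_nat_diff)
    finally have "(\<Sum>j\<in>J. (real j - 1)) = n * (n + 1) / 2" .
    moreover have "n > 0" using Kr by (simp add: n_def)
    ultimately show ?thesis by (simp add: sum_divide_distrib[symmetric] n_def[symmetric])
  qed
  have "(\<Sum>j\<in>J. bb j) \<le> (\<Sum>j\<in>J. 1 - (68/81) * ((real j - 1) / (real K - 2)) + (1 + (real K - 1) / 13) * aa j)"
    using bj by (rule sum_mono)
  also have "\<dots> = n - (68/81) * (\<Sum>j\<in>J. (real j - 1) / (real K - 2)) + (1 + (real K - 1) / 13) * (\<Sum>j\<in>J. aa j)"
    using cardJ by (simp add: sum.distrib sum_subtractf sum_distrib_left)
  also have "\<dots> \<le> n - (68/81) * ((n + 1) / 2) + (1 + (real K - 1) / 13) * 1"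
    using sa Kr by (simp only: sth) (intro add_mono mult_left_mono, auto)
  finally have sb: "(\<Sum>j\<in>J. bb j) \<le> n - (68/81) * ((n + 1) / 2) + (1 + (real K - 1) / 13)" by simp
  have n2: "n \<ge> 2" using Kr by (simp add: n_def)
  have s1b: "(\<Sum>j\<in>J. (1 - bb j)) \<ge> n / 100"
  proof -
    have "(\<Sum>j\<in>J. (1 - bb j)) = n - (\<Sum>j\<in>J. bb j)" using cardJ by (simp add: sum_subtractf)
    moreover have "real K - 1 = n + 1" by (simp add: n_def)
    ultimately have eq: "(\<Sum>j\<in>J. (1 - bb j)) = n - (\<Sum>j\<in>J. bb j)" "real K - 1 = n + 1" by auto
    have sb2: "(\<Sum>j\<in>J. bb j) \<le> n - 68/81 * ((n + 1) / 2) + (1 + (n + 1) / 13)"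
      using sb unfolding eq(2) .
    show ?thesis unfolding eq(1) using sb2 n2 by (simp add: field_simps)
  qed
  have "(\<Sum>j\<in>J. E j) \<ge> (\<Sum>j\<in>J. (eps K T * real T / 2) * (1 - bb j))"
    using Ej by (rule sum_mono)
  also have "(\<Sum>j\<in>J. (eps K T * real T / 2) * (1 - bb j)) = (eps K T * real T / 2) * (\<Sum>j\<in>J. (1 - bb j))"
    by (simp add: sum_distrib_left)
  also have "\<dots> \<ge> (eps K T * real T / 2) * (n / 100)"
    using s1b e T by (intro mult_left_mono) auto
  finally have "(\<Sum>j\<in>J. E j) \<ge> (eps K T * real T / 2) * (n / 100)" .
  then have R: "exp_regret K T pol \<ge> eps K T * real T / 200"
    unfolding ER using n2 by (simp add: field_simps)
  have "sqrt (real K * real T) / 21 \<le> eps K T * real T"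
  proof -
    have "(eps K T * real T)^2 = (eps K T)^2 * (real T)^2" by (rule power_mult_distrib)
    also have "\<dots> = (real K - 2) / (216 * real T) * (real T * real T)" unfolding eps_sq[OF a] by (simp add: power2_eq_square)
    also have "\<dots> = (real K - 2) * real T / 216" using T by simp
    also have "\<dots> \<ge> real K * real T / 441"
    proof -
      have "real K * 216 \<le> (real K - 2) * 441" using Kr by simp
      then have "real K * 216 * real T \<le> (real K - 2) * 441 * real T" using T by (intro mult_right_mono) auto
      then show ?thesis by (simp add: algebra_simps)
    qed
    finally have q: "real K * real T / 441 \<le> (eps K T * real T)^2" .
    have "sqrt (real K * real T) / 21 = sqrt (real K * real T / 441)"
      by (simp add: real_sqrt_divide)
    also have "\<dots> \<le> sqrt ((eps K T * real T)^2)" using q by (rule real_sqrt_le_mono)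
    also have "\<dots> = eps K T * real T" using e T by simp
    finally show ?thesis .
  qed
  then show ?thesis using R by simp
qed



theorem mainTheorem10:
  "\<exists>c>0. \<forall>(K::nat) (T::nat). K \<ge> 4 \<longrightarrow> T \<ge> K ^ 3 \<longrightarrow>
     (\<forall>M :: policy measure. prob_space M \<longrightarrow>
        (\<forall>pol\<in>space M. \<forall>h. pol h \<in> {0..1}) \<longrightarrow>
        (\<integral>\<^sup>+ pol. ennreal (exp_regret K T pol) \<partial>M) \<ge> ennreal (c * sqrt (real K * real T)))"
proof (intro exI[of _ "1/4200"] conjI allI impI)
  show "(0::real) < 1/4200" by simp
  fix K T :: nat and M :: "policy measure"
  assume K: "K \<ge> 4" and T: "T \<ge> K ^ 3" and M: "prob_space M"
  have "(\<integral>\<^sup>+ pol. ennreal (1/4200 * sqrt (real K * real T)) \<partial>M) \<le> (\<integral>\<^sup>+ pol. ennreal (exp_regret K T pol) \<partial>M)"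
  proof (rule nn_integral_mono)
    fix pol :: policy
    show "ennreal (1/4200 * sqrt (real K * real T)) \<le> ennreal (exp_regret K T pol)"
      using main_bound[OF K T, of pol] by (intro ennreal_leI) simp
  qed
  moreover have "(\<integral>\<^sup>+ pol. ennreal (1/4200 * sqrt (real K * real T)) \<partial>M) = ennreal (1/4200 * sqrt (real K * real T))"
    using prob_space.emeasure_space_1[OF M] by simp
  ultimately show "ennreal (1/4200 * sqrt (real K * real T)) \<le> (\<integral>\<^sup>+ pol. ennreal (exp_regret K T pol) \<partial>M)"
    by simp
qed

end
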